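(* Let $w\in S_n$ and $v\in S_n$ with $v\le w$. Then the restriction $[\Omega_v]_{X_w}:=\iota([\Omega_v])$ is the unique Knutson–Tao class for $v$ in $H^*_T(X_w)$.
   Context: Let $G=GL_n(\mathbb{C})$, $B$ (resp. $B^-$) the invertible upper- (resp. lower-) triangular matrices, and $T$ the diagonal torus. Permutations are identified with permutation matrices via $we_i=e_{w(i)}$, and $s_{jk}$ is the transposition of $j,k$. $X_w=\overline{BwB/B}$, the Bruhat order is $v\le w$ iff $[v]\in X_w$, $\mathrm{Inv}(w)=\{t_i-t_j:i<j,\ w^{-1}(i)>w^{-1}(j)\}$, and $\ell(w)=|\mathrm{Inv}(w)|$. In GKM form, $H^*_T(X_w)$ is the ring of tuples $(p_u)_{u\le w}$, $p_u\in\mathbb{C}[t_1,\ldots,t_n]$, with $p_u-p_{s_{jk}u}\in\langle t_j-t_k\rangle$ whenever $j<k$ and $u,s_{jk}u\le w$; $H^*_T(G/B)$ is the case $w=w_0$. Restriction $\iota:H^*_T(G/B)\to H^*_T(X_w)$ is $\iota((p_u)_{u\in S_n})=(p_u)_{u\le w}$. The Schubert class $[\Omega_v]\in H^*_T(G/B)$ is the equivariant class of $\overline{B^-vB/B}$; writing $[\Omega_v]=(p^v_u)_u$, one has $p^v_u=0$ unless $u\ge v$, each nonzero $p^v_u$ homogeneous of degree $\ell(v)$, and $p^v_v=\prod_{\beta\in\mathrm{Inv}(v)}\beta$. The moment graph of $X_w$ has vertices $\{u\le w\}$ and an edge between $u$ and $s_{jk}u$ (both $\le w$), directed from the Bruhat-larger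 to the Bruhat-smaller endpoint and labeled $t_j-t_k$. The edges out of $u$ are labeled exactly by $\mathrm{Inv}(u)$. A Knutson–Tao class for $v$ in $H^*_T(X_w)$ is $(q_u)_{u\le w}\in H^*_T(X_w)$ with: $q_v$ equal to the product of the labels of the edges out of $v$; every nonzero $q_u$ homogeneous of degree $\deg q_v$; and $q_u=0$ whenever there is no directed path of positive length from $u$ to $v$. *)

theory Defs
  imports "HOL-Library.Poly_Mapping" "HOL-Combinatorics.Combinatorics"
begin

type_synonym mpoly = "(nat \<Rightarrow>\<^sub>0 nat) \<Rightarrow>\<^sub>0 complex"

definition tvar :: "nat \<Rightarrow> mpoly" where
  "tvar i = Poly_Mapping.single (Poly_Mapping.single i 1) 1"

definition mdeg :: "(nat \<Rightarrow>\<^sub>0 nat) \<Rightarrow> nat" where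
  "mdeg m = (\<Sum>i\<in>Poly_Mapping.keys m. Poly_Mapping.lookup m i)"

definition homogeneous :: "nat \<Rightarrow> mpoly \<Rightarrow> bool" where
  "homogeneous d p \<longleftrightarrow> (\<forall>m\<in>Poly_Mapping.keys p. mdeg m = d)"

(* total degree (meaningful for nonzero polynomials) *)
definition poly_deg :: "mpoly \<Rightarrow> nat" where
  "poly_deg p = Max (mdeg ` Poly_Mapping.keys p)"

definition lbl :: "nat \<Rightarrow> nat \<Rightarrow> mpoly" where
  "lbl j k = tvar j - tvar k"

definition Sn :: "nat \<Rightarrow> (nat \<Rightarrow> nat) set" where
  "Sn n = {u. u permutes {1..n}}"

definition stu :: "nat \<Rightarrow> nat \<Rightarrow> (nat \<Rightarrow> nat) \<Rightarrow> (nat \<Rightarrow> nat)" where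
  "stu j k u = transpose j k \<circ> u"

(* Bruhat order via the tableau (rank) criterion:
   v <= w iff #{a <= i. v a >= k} <= #{a <= i. w a >= k} for all i,k *)
definition bcount :: "(nat \<Rightarrow> nat) \<Rightarrow> nat \<Rightarrow> nat \<Rightarrow> nat" where
  "bcount u i k = card {a \<in> {1..i}. k \<le> u a}"

definition bruhat_le :: "nat \<Rightarrow> (nat \<Rightarrow> nat) \<Rightarrow> (nat \<Rightarrow> nat) \<Rightarrow> bool" where
  "bruhat_le n v w \<longleftrightarrow> v \<in> Sn n \<and> w \<in> Sn n \<and>
     (\<forall>i\<in>{1..n}. \<forall>k\<in>{1..n}. bcount v i k \<le> bcount w i k)"

definition bruhat_lt :: "nat \<Rightarrow> (nat \<Rightarrow> nat) \<Rightarrow> (nat \<Rightarrow> nat) \<Rightarrow> bool" where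
  "bruhat_lt n v w \<longleftrightarrow> bruhat_le n v w \<and> v \<noteq> w"

(* Inv(w) = { t_i - t_j : i<j, w^{-1}(i) > w^{-1}(j) }, recorded as pairs (i,j) *)
definition inv_set :: "nat \<Rightarrow> (nat \<Rightarrow> nat) \<Rightarrow> (nat \<times> nat) set" where
  "inv_set n w = {(i,j). 1 \<le> i \<and> i < j \<and> j \<le> n \<and> inv w i > inv w j}"

definition len :: "nat \<Rightarrow> (nat \<Rightarrow> nat) \<Rightarrow> nat" where
  "len n w = card (inv_set n w)"

definition inv_prod :: "nat \<Rightarrow> (nat \<Rightarrow> nat) \<Rightarrow> mpoly" where
  "inv_prod n w = (\<Prod>(i,j)\<in>inv_set n w. lbl i j)"

definition gkm :: "nat \<Rightarrow> (nat \<Rightarrow> nat) set \<Rightarrow> ((nat \<Rightarrow> nat) \<Rightarrow> mpoly) \<Rightarrow> bool" where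
  "gkm n V p \<longleftrightarrow> (\<forall>u j k. u \<in> V \<and> 1 \<le> j \<and> j < k \<and> k \<le> n \<and> stu j k u \<in> V
       \<longrightarrow> lbl j k dvd (p u - p (stu j k u)))"

definition HT_flag :: "nat \<Rightarrow> ((nat \<Rightarrow> nat) \<Rightarrow> mpoly) \<Rightarrow> bool" where
  "HT_flag n p \<longleftrightarrow> gkm n (Sn n) p"

definition HT_X :: "nat \<Rightarrow> (nat \<Rightarrow> nat) \<Rightarrow> ((nat \<Rightarrow> nat) \<Rightarrow> mpoly) \<Rightarrow> bool" where
  "HT_X n w q \<longleftrightarrow> gkm n {u. bruhat_le n u w} q"

definition iota :: "nat \<Rightarrow> (nat \<Rightarrow> nat) \<Rightarrow> ((nat \<Rightarrow> nat) \<Rightarrow> mpoly) \<Rightarrow> ((nat \<Rightarrow> nat) \<Rightarrow> mpoly)" where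
  "iota n w p = (\<lambda>u. if bruhat_le n u w then p u else 0)"

definition mg_edge :: "nat \<Rightarrow> (nat \<Rightarrow> nat) \<Rightarrow> (nat \<Rightarrow> nat) \<Rightarrow> (nat \<Rightarrow> nat) \<Rightarrow> bool" where
  "mg_edge n w u u' \<longleftrightarrow> bruhat_le n u w \<and> bruhat_le n u' w \<and>
     (\<exists>j k. 1 \<le> j \<and> j < k \<and> k \<le> n \<and> u' = stu j k u) \<and> bruhat_lt n u' u"

definition out_edges :: "nat \<Rightarrow> (nat \<Rightarrow> nat) \<Rightarrow> (nat \<Rightarrow> nat) \<Rightarrow> (nat \<times> nat) set" where
  "out_edges n w u = {(j,k). 1 \<le> j \<and> j < k \<and> k \<le> n \<and> mg_edge n w u (stu j k u)}"

definition schubert_class :: "nat \<Rightarrow> (nat \<Rightarrow> nat) \<Rightarrow> ((nat \<Rightarrow> nat) \<Rightarrow> mpoly) \<Rightarrow> bool" where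
  "schubert_class n v p \<longleftrightarrow> HT_flag n p \<and>
     (\<forall>u\<in>Sn n. \<not> bruhat_le n v u \<longrightarrow> p u = 0) \<and>
     (\<forall>u\<in>Sn n. p u \<noteq> 0 \<longrightarrow> homogeneous (len n v) (p u)) \<and>
     p v = inv_prod n v"

definition KT_class :: "nat \<Rightarrow> (nat \<Rightarrow> nat) \<Rightarrow> (nat \<Rightarrow> nat) \<Rightarrow> ((nat \<Rightarrow> nat) \<Rightarrow> mpoly) \<Rightarrow> bool" where
  "KT_class n w v q \<longleftrightarrow> HT_X n w q \<and>
     q v = (\<Prod>(j,k)\<in>out_edges n w v. lbl j k) \<and>
     (\<forall>u. bruhat_le n u w \<and> q u \<noteq> 0 \<longrightarrow> homogeneous (poly_deg (q v)) (q u)) \<and>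
     (\<forall>u. bruhat_le n u w \<and> u \<noteq> v \<and> \<not> (mg_edge n w)\<^sup>+\<^sup>+ u v \<longrightarrow> q u = 0)"

end

theory Submission
  imports Defs
begin


lemma Sn_perm: "u \<in> Sn n \<Longrightarrow> u permutes {1..n}"
  by (simp add: Sn_def)

lemma stu_Sn: "u \<in> Sn n \<Longrightarrow> j \<in> {1..n} \<Longrightarrow> k \<in> {1..n} \<Longrightarrow> stu j k u \<in> Sn n"
proof -
  assume u: "u \<in> Sn n" and j: "j \<in> {1..n}" and k: "k \<in> {1..n}"
  have "transpose j k permutes {1..n}" by (rule permutes_swap_id[OF j k])
  with u have "transpose j k \<circ> u permutes {1..n}" unfolding Sn_def by (blast intro: permutes_compose)
  then show ?thesis by (simp add: Sn_def stu_def)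
qed

lemma bruhat_trans: "bruhat_le n a b \<Longrightarrow> bruhat_le n b c \<Longrightarrow> bruhat_le n a c"
  unfolding bruhat_le_def by (meson le_trans)

lemma inv_stu:
  assumes "u \<in> Sn n"
  shows "inv (stu j k u) = inv u \<circ> transpose j k"
proof -
  have "bij u" using assms by (simp add: Sn_def permutes_bij)
  then show ?thesis unfolding stu_def
    by (simp add: o_inv_distrib bij_transpose inv_transpose_eq)
qed

lemma stu_stu: "stu j k (stu j k u) = u"
  by (simp add: stu_def fun_eq_iff transpose_involutory)

lemma perm_facts:
  assumes "u \<in> Sn n"
  shows "\<And>x. u (inv u x) = x" "\<And>x. inv u (u x) = x"
    "\<And>x. x \<in> {1..n} \<Longrightarrow> u x \<in> {1..n}" "\<And>x. x \<in> {1..n} \<Longrightarrow> inv u x \<in> {1..n}"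
    "\<And>x. x \<notin> {1..n} \<Longrightarrow> u x = x" "inj u"
proof -
  have p: "u permutes {1..n}" using assms by (simp add: Sn_def)
  have pi: "inv u permutes {1..n}" using p by (rule permutes_inv)
  show "\<And>x. u (inv u x) = x" "\<And>x. inv u (u x) = x" using p by (simp_all add: permutes_inverses)
  show "\<And>x. x \<in> {1..n} \<Longrightarrow> u x \<in> {1..n}" using permutes_in_image[OF p] by blast
  show "\<And>x. x \<in> {1..n} \<Longrightarrow> inv u x \<in> {1..n}" using permutes_in_image[OF pi] by blast
  show "\<And>x. x \<notin> {1..n} \<Longrightarrow> u x = x" using permutes_not_in[OF p] by blast
  show "inj u" using p by (rule permutes_inj)
qed

lemma bc_swap:
  assumes u: "u \<in> Sn n" and jk: "1 \<le> j" "j < k" "k \<le> n" and ab: "inv u k < inv u j"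
  shows "bcount (stu j k u) i m + (if inv u k \<le> i \<and> i < inv u j \<and> j < m \<and> m \<le> k then 1 else 0)
         = bcount u i m"
proof -
  define a where "a = inv u k"
  define b where "b = inv u j"
  note pf = perm_facts[OF u]
  have ua: "u a = k" and ub: "u b = j" using pf by (simp_all add: a_def b_def)
  have a1: "a \<in> {1..n}" and b1: "b \<in> {1..n}" using pf jk by (auto simp: a_def b_def)
  have "a < b" using ab by (simp add: a_def b_def)
  have u': "stu j k u p = (if p = a then j else if p = b then k else u p)" for p
  proof -
    have "p \<noteq> a \<Longrightarrow> u p \<noteq> k" "p \<noteq> b \<Longrightarrow> u p \<noteq> j"
      using pf(2) by (metis a_def, metis b_def)
    then show ?thesis using ua ub jk by (auto simp: stu_def transpose_def)
  qed
  define A where "A = {p \<in> {1..i}. m \<le> u p}"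
  define A' where "A' = {p \<in> {1..i}. m \<le> stu j k u p}"
  have fin: "finite A" by (simp add: A_def)
  have "card A' + (if a \<le> i \<and> i < b \<and> j < m \<and> m \<le> k then 1 else 0) = card A"
  proof (cases "j < m \<and> m \<le> k")
    case True
    show ?thesis
    proof (cases "a \<le> i")
      case ai: True
      show ?thesis
      proof (cases "i < b")
        case True
        have "A' = A - {a}" "a \<in> A"
          using True ai a1 b1 \<open>a < b\<close> \<open>j < m \<and> m \<le> k\<close> ua ub jk
          by (auto simp: A_def A'_def u')
        then have "card A = Suc (card A')" using card.remove[OF fin, of a] by simp
        then show ?thesis using True ai \<open>j < m \<and> m \<le> k\<close> by simp
      next
        case False
        have "A' = insert b (A - {a})" "a \<in> A" "b \<notin> A"
          using False ai a1 b1 \<open>a < b\<close> \<open>j < m \<and> m \<le> k\<close> ua ub jk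
          by (auto simp: A_def A'_def u')
        then have "card A' = Suc (card (A - {a}))" using fin by simp
        also have "\<dots> = card A" using card.remove[OF fin \<open>a \<in> A\<close>] by simp
        finally show ?thesis using False by simp
      qed
    next
      case False
      have "A' = A" using False a1 b1 \<open>a < b\<close> by (auto simp: A_def A'_def u')
      then show ?thesis using False by simp
    qed
  next
    case False
    have "A' = A" using False ua ub jk by (auto simp: A_def A'_def u')
    then show ?thesis using False by simp
  qed
  then show ?thesis by (simp add: bcount_def A_def A'_def a_def b_def)
qed

lemma inv_set_iff:
  "(j, k) \<in> inv_set n u \<longleftrightarrow> 1 \<le> j \<and> j < k \<and> k \<le> n \<and> inv u k < inv u j"
  by (simp add: inv_set_def)

lemma C1a:
  assumes u: "u \<in> Sn n" and "(j, k) \<in> inv_set n u"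
  shows "bruhat_lt n (stu j k u) u"
proof -
  have jk: "1 \<le> j" "j < k" "k \<le> n" "inv u k < inv u j" using assms(2) by (auto simp: inv_set_iff)
  note key = bc_swap[OF u jk]
  have "stu j k u \<in> Sn n" using stu_Sn[OF u] jk by auto
  moreover have "bcount (stu j k u) i m \<le> bcount u i m" for i m using key[of i m] by linarith
  moreover have "stu j k u (inv u k) \<noteq> u (inv u k)"
    using perm_facts[OF u] jk by (simp add: stu_def transpose_def)
  ultimately show ?thesis using u by (auto simp: bruhat_lt_def bruhat_le_def)
qed

lemma C1b:
  assumes u: "u \<in> Sn n" and jk: "1 \<le> j" "j < k" "k \<le> n" "inv u j < inv u k"
  shows "\<not> bruhat_le n (stu j k u) u"
proof
  assume le: "bruhat_le n (stu j k u) u"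
  define u' where "u' = stu j k u"
  have u'S: "u' \<in> Sn n" using stu_Sn[OF u] jk by (auto simp: u'_def)
  have iu': "inv u' = inv u \<circ> transpose j k" using inv_stu[OF u] by (simp add: u'_def)
  have "inv u' k < inv u' j" using jk by (simp add: iu' transpose_def)
  note key = bc_swap[OF u'S jk(1-3) this]
  have e: "stu j k u' = u" by (simp add: u'_def stu_stu)
  define i where "i = inv u j"
  have i1: "i \<in> {1..n}" using perm_facts[OF u] jk by (auto simp: i_def)
  have iv: "inv u' k = i" "inv u' j = inv u k" using jk by (auto simp: iu' transpose_def i_def)
  have "i < inv u k" using jk by (simp add: i_def)
  with key[of i k] e jk iv have "bcount u i k + 1 = bcount u' i k" by simp
  moreover have "bcount u' i k \<le> bcount u i k" using le i1 jk by (auto simp: bruhat_le_def u'_def)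
  ultimately show False by simp
qed

lemma edge_inv:
  assumes u: "u \<in> Sn n" and jk: "1 \<le> j" "j < k" "k \<le> n" and lt: "bruhat_lt n (stu j k u) u"
  shows "(j, k) \<in> inv_set n u"
proof -
  have "inv u j \<noteq> inv u k" using perm_facts(1)[OF u, of j] perm_facts(1)[OF u, of k] jk(2) by auto
  moreover have "\<not> inv u j < inv u k" using C1b[OF u jk] lt by (auto simp: bruhat_lt_def)
  ultimately show ?thesis using jk by (auto simp: inv_set_iff)
qed

lemma out_edges_eq:
  assumes "bruhat_le n u w"
  shows "out_edges n w u = inv_set n u"
proof -
  have u: "u \<in> Sn n" using assms by (simp add: bruhat_le_def)
  show ?thesis
  proof (intro set_eqI iffI)
    fix x assume "x \<in> out_edges n w u"
    then obtain j k where x: "x = (j, k)" "1 \<le> j" "j < k" "k \<le> n" "mg_edge n w u (stu j k u)"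
      by (auto simp: out_edges_def)
    then show "x \<in> inv_set n u" using edge_inv[OF u] by (auto simp: mg_edge_def)
  next
    fix x assume x: "x \<in> inv_set n u"
    then obtain j k where jk: "x = (j, k)" by (cases x)
    with x have lt: "bruhat_lt n (stu j k u) u" using C1a[OF u] by simp
    then have "bruhat_le n (stu j k u) w" using assms bruhat_trans by (auto simp: bruhat_lt_def)
    then show "x \<in> out_edges n w u" using jk x lt assms
      by (auto simp: out_edges_def mg_edge_def inv_set_iff)
  qed
qed

lemma g_inj:
  fixes j k p q p' q' :: nat
  assumes jk: "j < k" and pq: "p < q" "p' < q'"
    and e: "(if transpose j k p < transpose j k q then (transpose j k p, transpose j k q) else (p, q))
          = (if transpose j k p' < transpose j k q' then (transpose j k p', transpose j k q') else (p', q'))"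
  shows "p = p' \<and> q = q'"
  using assms unfolding transpose_def by (simp split: if_splits) linarith?

lemma g_img:
  fixes j k p q n :: nat and f :: "nat \<Rightarrow> nat"
  assumes jk: "1 \<le> j" "j < k" "k \<le> n" "f k < f j" and pq: "1 \<le> p" "p < q" "q \<le> n"
    "f (transpose j k q) < f (transpose j k p)"
  shows "(if transpose j k p < transpose j k q then (transpose j k p, transpose j k q) else (p, q))
     \<in> {(p, q). 1 \<le> p \<and> p < q \<and> q \<le> n \<and> f q < f p} - {(j, k)}"
proof (cases "transpose j k p < transpose j k q")
  case True
  have "1 \<le> transpose j k p" "transpose j k q \<le> n" using jk pq by (auto simp: transpose_def)
  moreover have "(transpose j k p, transpose j k q) \<noteq> (j, k)"
    using pq(2) jk(2) by (auto simp: transpose_def split: if_splits)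
  ultimately show ?thesis using True pq(4) by simp
next
  case False
  then have c: "(p = j \<and> j < q \<and> q < k) \<or> (j < p \<and> p < k \<and> q = k)"
    using pq(2,4) jk(2,4) by (auto simp: transpose_def split: if_splits)
  then show ?thesis using False pq jk by (auto simp: transpose_def)
qed

lemma inv_count_swap:
  fixes f :: "nat \<Rightarrow> nat"
  assumes jk: "1 \<le> j" "j < k" "k \<le> n" "f k < f j"
  shows "card {(p, q). 1 \<le> p \<and> p < q \<and> q \<le> n \<and> f (transpose j k q) < f (transpose j k p)}
       < card {(p, q). 1 \<le> p \<and> p < q \<and> q \<le> n \<and> f q < f p}"
proof -
  let ?t = "transpose j k"
  define I' where "I' = {(p, q). 1 \<le> p \<and> p < q \<and> q \<le> n \<and> f (?t q) < f (?t p)}"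
  define I where "I = {(p, q). 1 \<le> p \<and> p < q \<and> q \<le> n \<and> f q < f p}"
  define g where "g = (\<lambda>(p, q). if ?t p < ?t q then (?t p, ?t q) else (p, q))"
  have finI: "finite I"
    by (rule finite_subset[of _ "{1..n} \<times> {1..n}"]) (auto simp: I_def)
  have inj: "inj_on g I'"
  proof (rule inj_onI)
    fix x y assume x: "x \<in> I'" and y: "y \<in> I'" and e: "g x = g y"
    obtain p q where [simp]: "x = (p, q)" by (cases x)
    obtain p' q' where [simp]: "y = (p', q')" by (cases y)
    from x y e have "p < q" "p' < q'" and e': "(if ?t p < ?t q then (?t p, ?t q) else (p, q))
          = (if ?t p' < ?t q' then (?t p', ?t q') else (p', q'))" by (auto simp: I'_def g_def)
    show "x = y" using g_inj[OF jk(2) \<open>p < q\<close> \<open>p' < q'\<close> e'] by simp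
  qed
  have img: "g ` I' \<subseteq> I - {(j, k)}"
  proof
    fix y assume "y \<in> g ` I'"
    then obtain p q where pq: "(p, q) \<in> I'" "y = g (p, q)" by auto
    from pq have "1 \<le> p" "p < q" "q \<le> n" "f (?t q) < f (?t p)" by (auto simp: I'_def)
    from g_img[OF jk this] pq(2) show "y \<in> I - {(j, k)}" by (simp add: I_def g_def)
  qed
  have "card I' \<le> card (I - {(j, k)})"
    by (rule card_inj_on_le[OF inj img]) (use finI in simp)
  also have "\<dots> < card I"
    using finI jk by (intro card_Diff1_less) (auto simp: I_def)
  finally show ?thesis by (simp add: I'_def I_def)
qed

lemma C2:
  assumes u: "u \<in> Sn n" and jk: "(j, k) \<in> inv_set n u"
  shows "len n (stu j k u) < len n u"
proof -
  have j: "1 \<le> j" "j < k" "k \<le> n" "inv u k < inv u j" using jk by (auto simp: inv_set_iff)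
  have "inv_set n (stu j k u) = {(p, q). 1 \<le> p \<and> p < q \<and> q \<le> n \<and> inv u (transpose j k q) < inv u (transpose j k p)}"
    by (auto simp: inv_set_def inv_stu[OF u])
  moreover have "inv_set n u = {(p, q). 1 \<le> p \<and> p < q \<and> q \<le> n \<and> inv u q < inv u p}"
    by (auto simp: inv_set_def)
  ultimately show ?thesis unfolding len_def using inv_count_swap[OF j] by simp
qed

lemma edge_len: "mg_edge n w x y \<Longrightarrow> len n y < len n x"
  unfolding mg_edge_def
  by (metis C2 edge_inv bruhat_le_def)

lemma path_len: "(mg_edge n w)\<^sup>+\<^sup>+ x y \<Longrightarrow> len n y < len n x"
  by (induction rule: tranclp.induct) (auto dest: edge_len)




lemma pm_expand:
  fixes f :: "'a \<Rightarrow>\<^sub>0 'b::comm_monoid_add"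
  assumes "finite K" "Poly_Mapping.keys f \<subseteq> K"
  shows "f = (\<Sum>m\<in>K. Poly_Mapping.single m (Poly_Mapping.lookup f m))"
proof (rule poly_mapping_eqI)
  fix k
  have "Poly_Mapping.lookup (\<Sum>m\<in>K. Poly_Mapping.single m (Poly_Mapping.lookup f m)) k
      = (\<Sum>m\<in>K. (if m = k then Poly_Mapping.lookup f m else 0))"
    by (simp add: lookup_sum lookup_single when_def)
  also have "\<dots> = Poly_Mapping.lookup f k"
    using assms by (auto simp: sum.delta in_keys_iff)
  finally show "Poly_Mapping.lookup f k = Poly_Mapping.lookup (\<Sum>m\<in>K. Poly_Mapping.single m (Poly_Mapping.lookup f m)) k" by simp
qed

definition remap :: "((nat \<Rightarrow>\<^sub>0 nat) \<Rightarrow> (nat \<Rightarrow>\<^sub>0 nat)) \<Rightarrow> mpoly \<Rightarrow> mpoly" where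
  "remap \<phi> h = (\<Sum>m\<in>Poly_Mapping.keys h. Poly_Mapping.single (\<phi> m) (Poly_Mapping.lookup h m))"

lemma remap_superset:
  assumes "finite K" "Poly_Mapping.keys h \<subseteq> K"
  shows "remap \<phi> h = (\<Sum>m\<in>K. Poly_Mapping.single (\<phi> m) (Poly_Mapping.lookup h m))"
  unfolding remap_def
  by (rule sum.mono_neutral_left) (use assms in \<open>auto simp: in_keys_iff\<close>)

lemma remap_add: "remap \<phi> (h1 + h2) = remap \<phi> h1 + remap \<phi> h2"
proof -
  let ?K = "Poly_Mapping.keys h1 \<union> Poly_Mapping.keys h2"
  have k: "Poly_Mapping.keys (h1 + h2) \<subseteq> ?K" by (rule keys_add)
  show ?thesis
    by (subst (1 2 3) remap_superset[where K = ?K]) 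
       (use k in \<open>auto simp: lookup_add single_add sum.distrib\<close>)
qed

lemma remap_zero [simp]: "remap \<phi> 0 = 0"
  by (simp add: remap_def)

lemma remap_diff: "remap \<phi> (h1 - h2) = remap \<phi> h1 - remap \<phi> h2"
  using remap_add[of \<phi> "h1 - h2" h2] by (simp add: algebra_simps)

lemma remap_sum: "finite I \<Longrightarrow> remap \<phi> (\<Sum>i\<in>I. f i) = (\<Sum>i\<in>I. remap \<phi> (f i))"
  by (induction I rule: finite_induct) (auto simp: remap_add)

lemma remap_single [simp]: "remap \<phi> (Poly_Mapping.single m c) = Poly_Mapping.single (\<phi> m) c"
  by (cases "c = 0") (auto simp: remap_def)

lemma mult_expand:
  fixes h1 h2 :: mpoly
  shows "h1 * h2 = (\<Sum>x\<in>Poly_Mapping.keys h1. \<Sum>y\<in>Poly_Mapping.keys h2.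
      Poly_Mapping.single (x + y) (Poly_Mapping.lookup h1 x * Poly_Mapping.lookup h2 y))"
proof -
  have "h1 * h2 = (\<Sum>x\<in>Poly_Mapping.keys h1. Poly_Mapping.single x (Poly_Mapping.lookup h1 x)) *
     (\<Sum>y\<in>Poly_Mapping.keys h2. Poly_Mapping.single y (Poly_Mapping.lookup h2 y))"
    using pm_expand[of "Poly_Mapping.keys h1" h1] pm_expand[of "Poly_Mapping.keys h2" h2] by simp
  also have "\<dots> = (\<Sum>x\<in>Poly_Mapping.keys h1. \<Sum>y\<in>Poly_Mapping.keys h2.
      Poly_Mapping.single (x + y) (Poly_Mapping.lookup h1 x * Poly_Mapping.lookup h2 y))"
    by (simp add: sum_product mult_single)
  finally show ?thesis .
qed

lemma remap_mult:
  assumes add: "\<And>x y. \<phi> (x + y) = \<phi> x + \<phi> y"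
  shows "remap \<phi> (h1 * h2) = remap \<phi> h1 * remap \<phi> h2"
proof -
  have "remap \<phi> (h1 * h2) = (\<Sum>x\<in>Poly_Mapping.keys h1. \<Sum>y\<in>Poly_Mapping.keys h2.
      Poly_Mapping.single (\<phi> x + \<phi> y) (Poly_Mapping.lookup h1 x * Poly_Mapping.lookup h2 y))"
    by (subst mult_expand) (simp add: remap_sum add)
  also have "\<dots> = remap \<phi> h1 * remap \<phi> h2"
    by (simp add: remap_def sum_product mult_single)
  finally show ?thesis .
qed

(* substitution t_b := t_a *)
definition subm :: "nat \<Rightarrow> nat \<Rightarrow> (nat \<Rightarrow>\<^sub>0 nat) \<Rightarrow> (nat \<Rightarrow>\<^sub>0 nat)" where
  "subm a b m = Poly_Mapping.update b 0 m + Poly_Mapping.single a (Poly_Mapping.lookup m b)"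

lemma subm_add: "subm a b (x + y) = subm a b x + subm a b y"
  by (rule poly_mapping_eqI) (simp add: subm_def lookup_add lookup_update lookup_single when_def)

lemma tvar_power: "tvar i ^ e = Poly_Mapping.single (Poly_Mapping.single i e) 1"
proof (induction e)
  case 0 then show ?case by simp
next
  case (Suc e)
  have "Poly_Mapping.single i (Suc e) = Poly_Mapping.single i 1 + Poly_Mapping.single i e"
    by (simp flip: single_add)
  then show ?case using Suc by (simp add: tvar_def mult_single)
qed

lemma remap_tvar: "remap (subm a b) (tvar i) = tvar (if i = b then a else i)"
proof -
  have "subm a b (Poly_Mapping.single i 1) = Poly_Mapping.single (if i = b then a else i) 1"
    by (rule poly_mapping_eqI) (auto simp: subm_def lookup_add lookup_update lookup_single when_def)
  then show ?thesis by (simp add: tvar_def)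
qed

lemma single_one_inj: "Poly_Mapping.single x (1::'b::zero_neq_one) = Poly_Mapping.single y 1 \<longleftrightarrow> x = y"
  by (metis lookup_single_eq lookup_single_not_eq zero_neq_one)

lemma tvar_inj: "tvar i = tvar j \<longleftrightarrow> i = j"
  unfolding tvar_def by (metis single_one_inj)

lemma monom_kernel:
  "lbl a b dvd (Poly_Mapping.single m c - Poly_Mapping.single (subm a b m) c)"
proof -
  define m' where "m' = Poly_Mapping.update b 0 m"
  define e where "e = Poly_Mapping.lookup m b"
  have m: "m = m' + Poly_Mapping.single b e"
    by (rule poly_mapping_eqI) (simp add: m'_def e_def lookup_add lookup_update lookup_single when_def)
  have s: "subm a b m = m' + Poly_Mapping.single a e"
    by (simp add: subm_def m'_def e_def)
  have "Poly_Mapping.single m c - Poly_Mapping.single (subm a b m) c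
      = Poly_Mapping.single m' c * (tvar b ^ e - tvar a ^ e)"
    by (subst (1) m, subst s) (simp add: tvar_power mult_single right_diff_distrib)
  moreover have "lbl a b dvd (tvar b ^ e - tvar a ^ e)"
  proof -
    have "tvar b ^ e - tvar a ^ e = (tvar b - tvar a) * (\<Sum>i<e. tvar a ^ (e - Suc i) * tvar b ^ i)"
      by (rule power_diff_sumr2)
    also have "tvar b - tvar a = - lbl a b" by (simp add: lbl_def)
    finally show ?thesis by simp
  qed
  ultimately show ?thesis by simp
qed

lemma remap_kernel: "lbl a b dvd (h - remap (subm a b) h)"
proof -
  have "h - remap (subm a b) h = (\<Sum>m\<in>Poly_Mapping.keys h.
      Poly_Mapping.single m (Poly_Mapping.lookup h m) - Poly_Mapping.single (subm a b m) (Poly_Mapping.lookup h m))"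
    by (subst (1) pm_expand[of "Poly_Mapping.keys h" h]) (simp_all add: remap_def sum_subtractf)
  also have "lbl a b dvd \<dots>" by (rule dvd_sum) (rule monom_kernel)
  finally show ?thesis .
qed

lemma lbl_prime:
  assumes "a < b" "j < k" "(j, k) \<noteq> (a, b)" "lbl a b dvd lbl j k * g"
  shows "lbl a b dvd g"
proof -
  let ?s = "remap (subm a b)"
  from assms(4) obtain h where h: "lbl j k * g = lbl a b * h" by (auto elim: dvdE)
  have hom: "?s (x * y) = ?s x * ?s y" for x y by (rule remap_mult) (rule subm_add)
  have "?s (lbl a b) = 0" using assms(1) by (simp add: lbl_def remap_diff remap_tvar)
  moreover have "?s (lbl j k) * ?s g = ?s (lbl a b) * ?s h"
    using hom[of "lbl j k" g] hom[of "lbl a b" h] h by simp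
  ultimately have "?s (lbl j k) * ?s g = 0" by simp
  moreover have "?s (lbl j k) \<noteq> 0"
    using assms(1-3) by (auto simp: lbl_def remap_diff remap_tvar tvar_inj)
  ultimately have "?s g = 0" by simp
  then show ?thesis using remap_kernel[of a b g] by simp
qed



lemma mdeg_superset:
  assumes "finite K" "Poly_Mapping.keys m \<subseteq> K"
  shows "mdeg m = (\<Sum>i\<in>K. Poly_Mapping.lookup m i)"
  unfolding mdeg_def
  by (rule sum.mono_neutral_left) (use assms in \<open>auto simp: in_keys_iff\<close>)

lemma mdeg_add: "mdeg (x + y) = mdeg x + mdeg y"
proof -
  let ?K = "Poly_Mapping.keys x \<union> Poly_Mapping.keys y"
  have "Poly_Mapping.keys (x + y) \<subseteq> ?K" by (rule keys_add)
  then show ?thesis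
    by (subst (1 2 3) mdeg_superset[where K = ?K]) (auto simp: lookup_add sum.distrib)
qed

lemma mdeg_single1: "mdeg (Poly_Mapping.single i 1) = 1"
  by (simp add: mdeg_def)

definition Dg :: "mpoly \<Rightarrow> nat" where
  "Dg f = mdeg (Max (Poly_Mapping.keys f))"

lemma max_key_mult:
  fixes f g :: mpoly
  assumes "f \<noteq> 0" "g \<noteq> 0"
  shows "Max (Poly_Mapping.keys (f * g)) = Max (Poly_Mapping.keys f) + Max (Poly_Mapping.keys g)"
proof -
  define F where "F = Poly_Mapping.keys f"
  define G where "G = Poly_Mapping.keys g"
  have F: "finite F" "F \<noteq> {}" using assms(1) by (auto simp: F_def)
  have G: "finite G" "G \<noteq> {}" using assms(2) by (auto simp: G_def)
  define q where "q = Max F + Max G"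
  have le: "x \<le> q" if "x \<in> Poly_Mapping.keys (f * g)" for x
  proof -
    from keys_mult[of f g] that obtain a b where "x = a + b" "a \<in> F" "b \<in> G"
      by (auto simp: F_def G_def)
    then show ?thesis using F G unfolding q_def by (simp add: add_mono)
  qed
  have inner: "(\<Sum>b\<in>G. if a + b = q then Poly_Mapping.lookup f a * Poly_Mapping.lookup g b else 0)
      = (if a = Max F then Poly_Mapping.lookup f a * Poly_Mapping.lookup g (Max G) else 0)"
    if "a \<in> F" for a
  proof (cases "a = Max F")
    case True
    have "a + b = q \<longleftrightarrow> b = Max G" for b using True unfolding q_def by simp
    then show ?thesis using True G by (simp add: sum.delta')
  next
    case False
    have "a < Max F" using False that F by (simp add: order.not_eq_order_implies_strict)
    have "a + b \<noteq> q" if "b \<in> G" for b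
    proof -
      have "a + b < Max F + b" using \<open>a < Max F\<close> by simp
      also have "\<dots> \<le> Max F + Max G" using that G by (simp add: add_left_mono)
      finally show ?thesis unfolding q_def by simp
    qed
    then show ?thesis using False by simp
  qed
  have "Poly_Mapping.lookup (f * g) q = (\<Sum>a\<in>F. \<Sum>b\<in>G. if a + b = q then Poly_Mapping.lookup f a * Poly_Mapping.lookup g b else 0)"
    by (subst mult_expand) (simp add: F_def G_def lookup_sum lookup_single when_def)
  also have "\<dots> = (\<Sum>a\<in>F. if a = Max F then Poly_Mapping.lookup f a * Poly_Mapping.lookup g (Max G) else 0)"
    using inner by (rule sum.cong[OF refl])
  also have "\<dots> = Poly_Mapping.lookup f (Max F) * Poly_Mapping.lookup g (Max G)"
    using F by (simp add: sum.delta')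
  also have "\<dots> \<noteq> 0" using F G by (simp add: F_def G_def in_keys_iff[symmetric])
  finally have "q \<in> Poly_Mapping.keys (f * g)" by (simp add: in_keys_iff)
  then show ?thesis using le unfolding q_def F_def G_def
    by (intro Max_eqI) auto
qed

lemma Dg_mult: "f \<noteq> 0 \<Longrightarrow> g \<noteq> 0 \<Longrightarrow> Dg (f * g) = Dg f + Dg g"
  by (simp add: Dg_def max_key_mult mdeg_add)

lemma keys_lbl: "j \<noteq> k \<Longrightarrow> Poly_Mapping.keys (lbl j k) = {Poly_Mapping.single j 1, Poly_Mapping.single k 1}"
proof -
  assume "j \<noteq> k"
  then have ne: "Poly_Mapping.single j (1::nat) \<noteq> Poly_Mapping.single k 1" by (metis single_one_inj)
  show ?thesis
    using ne by (auto simp: lbl_def tvar_def in_keys_iff lookup_minus lookup_single when_def split: if_splits)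
qed

lemma lbl_nonzero: "j \<noteq> k \<Longrightarrow> lbl j k \<noteq> 0"
  using keys_lbl by fastforce

lemma Dg_lbl: "j \<noteq> k \<Longrightarrow> Dg (lbl j k) = 1"
proof -
  assume "j \<noteq> k"
  have "Max (Poly_Mapping.keys (lbl j k)) \<in> {Poly_Mapping.single j 1, Poly_Mapping.single k 1}"
    using Max_in[of "Poly_Mapping.keys (lbl j k)"] keys_lbl[OF \<open>j \<noteq> k\<close>] by simp
  then show ?thesis by (auto simp: Dg_def mdeg_def)
qed

lemma alg_count:
  assumes "finite S" "\<forall>(j,k)\<in>S. j < k" "\<forall>(j,k)\<in>S. lbl j k dvd f" "f \<noteq> 0"
  shows "card S \<le> Dg f"
  using assms
proof (induction S arbitrary: f rule: finite_induct)
  case empty then show ?case by simp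
next
  case (insert x S)
  obtain j k where x: "x = (j, k)" by (cases x)
  with insert.prems have jk: "j < k" "lbl j k dvd f" by auto
  then obtain g where g: "f = lbl j k * g" by (auto elim: dvdE)
  with insert.prems have g0: "g \<noteq> 0" by auto
  have "\<forall>(a,b)\<in>S. lbl a b dvd g"
  proof (clarify)
    fix a b assume ab: "(a, b) \<in> S"
    then have "a < b" "lbl a b dvd lbl j k * g" using insert.prems g by auto
    moreover have "(j, k) \<noteq> (a, b)" using ab insert.hyps(2) x by auto
    ultimately show "lbl a b dvd g" using lbl_prime jk(1) by blast
  qed
  then have "card S \<le> Dg g" using insert.IH[of g] insert.prems g0 by auto
  moreover have "Dg f = 1 + Dg g" using g g0 jk(1) by (simp add: Dg_mult lbl_nonzero Dg_lbl)
  ultimately show ?case using insert.hyps by simp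
qed

lemma homogeneous_Dg: "homogeneous d f \<Longrightarrow> f \<noteq> 0 \<Longrightarrow> Dg f = d"
proof -
  assume h: "homogeneous d f" and f: "f \<noteq> 0"
  then have "Poly_Mapping.keys f \<noteq> {}" by simp
  then have "Max (Poly_Mapping.keys f) \<in> Poly_Mapping.keys f" by (simp add: Max_in)
  then show ?thesis using h unfolding homogeneous_def Dg_def by auto
qed

lemma homogeneous_poly_deg: "homogeneous d f \<Longrightarrow> f \<noteq> 0 \<Longrightarrow> poly_deg f = d"
proof -
  assume h: "homogeneous d f" and f: "f \<noteq> 0"
  then have "Poly_Mapping.keys f \<noteq> {}" by simp
  then obtain m0 where m0: "m0 \<in> Poly_Mapping.keys f" by blast
  have "mdeg ` Poly_Mapping.keys f = {d}" using h m0 unfolding homogeneous_def by force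
  then show ?thesis unfolding poly_deg_def by simp
qed

lemma homogeneous_zero [simp]: "homogeneous d 0"
  by (simp add: homogeneous_def)

lemma homogeneous_diff: "homogeneous d f \<Longrightarrow> homogeneous d g \<Longrightarrow> homogeneous d (f - g)"
  unfolding homogeneous_def by (auto simp: in_keys_iff lookup_minus)

lemma alg_main:
  assumes "finite S" "\<forall>(j,k)\<in>S. j < k" "\<forall>(j,k)\<in>S. lbl j k dvd f"
    and "homogeneous d f" "d < card S"
  shows "f = 0"
  using alg_count[OF assms(1-3)] homogeneous_Dg[OF assms(4)] assms(5) by fastforce



lemma bcount_split:
  assumes "1 \<le> a" "a \<le> Suc i"
  shows "bcount u i m = bcount u (a - 1) m + card {p \<in> {a..i}. m \<le> u p}"
proof -
  have "{p \<in> {1..i}. m \<le> u p} = {p \<in> {1..a - 1}. m \<le> u p} \<union> {p \<in> {a..i}. m \<le> u p}"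
    using assms by auto
  moreover have "{p \<in> {1..a - 1}. m \<le> u p} \<inter> {p \<in> {a..i}. m \<le> u p} = {}" using assms by auto
  ultimately show ?thesis unfolding bcount_def by (simp add: card_Un_disjoint)
qed

lemma chain:
  assumes u: "u \<in> Sn n" and v: "v \<in> Sn n" and le: "bruhat_le n v u" and ne: "v \<noteq> u"
  shows "\<exists>j k. (j, k) \<in> inv_set n u \<and> bruhat_le n v (stu j k u)"
proof -
  note pu = perm_facts[OF u] and pv = perm_facts[OF v]
  have ex: "\<exists>p. v p \<noteq> u p" using ne by auto
  define a where "a = (LEAST p. v p \<noteq> u p)"
  have va: "v a \<noteq> u a" unfolding a_def using ex by (rule LeastI_ex)
  have before: "v p = u p" if "p < a" for p using that not_less_Least unfolding a_def by blast
  have a1: "a \<in> {1..n}"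
  proof (rule ccontr)
    assume "a \<notin> {1..n}"
    then have "v a = a" "u a = a" using pu pv by auto
    with va show False by simp
  qed
  have pre: "bcount v (a - 1) m = bcount u (a - 1) m" for m
  proof -
    have "{p \<in> {1..a - 1}. m \<le> v p} = {p \<in> {1..a - 1}. m \<le> u p}"
      using before a1 by auto
    then show ?thesis by (simp add: bcount_def)
  qed
  define x where "x = v a"
  define y where "y = u a"
  have x1: "x \<in> {1..n}" and y1: "y \<in> {1..n}" using a1 pu pv by (auto simp: x_def y_def)
  have lecount: "bcount v i m \<le> bcount u i m" if "i \<in> {1..n}" "m \<in> {1..n}" for i m
    using le that by (auto simp: bruhat_le_def)
  have "x < y"
  proof (rule ccontr)
    assume "\<not> x < y"
    then have "y < x" using va by (simp add: x_def y_def)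
    have s1: "{p \<in> {a..a}. x \<le> v p} = {a}" by (auto simp: x_def)
    have s2: "{p \<in> {a..a}. x \<le> u p} = {}" using \<open>y < x\<close> by (auto simp: y_def)
    have "bcount v a x = bcount v (a - 1) x + 1"
      using bcount_split[of a a v x] a1 s1 by simp
    moreover have "bcount u a x = bcount u (a - 1) x"
      using bcount_split[of a a u x] a1 s2 by simp
    moreover have "bcount v a x \<le> bcount u a x" using lecount a1 x1 by blast
    ultimately show False using pre[of x] by simp
  qed
  define c where "c = inv u x"
  have uc: "u c = x" using pu by (simp add: c_def)
  have c1: "c \<in> {1..n}" using pu x1 by (simp add: c_def)
  have "c \<noteq> a" using uc \<open>x < y\<close> by (auto simp: y_def)
  moreover have "\<not> c < a"
  proof
    assume "c < a"
    then have "v c = v a" using before uc by (simp add: x_def)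
    then have "c = a" using pv(6) by (simp add: inj_eq)
    with \<open>c < a\<close> show False by simp
  qed
  ultimately have "a < c" by simp
  define B where "B = {p. a < p \<and> p \<le> n \<and> x \<le> u p \<and> u p < y}"
  have cB: "c \<in> B" using \<open>a < c\<close> c1 uc \<open>x < y\<close> by (auto simp: B_def)
  define b where "b = (LEAST p. p \<in> B)"
  have bB: "b \<in> B" unfolding b_def using cB by (rule LeastI)
  have gap: "\<not> (x \<le> u p \<and> u p < y)" if "a < p" "p < b" for p
  proof
    assume h: "x \<le> u p \<and> u p < y"
    have "p \<le> n" using that bB by (auto simp: B_def)
    then have "p \<in> B" using that h by (auto simp: B_def)
    then have "b \<le> p" unfolding b_def by (rule Least_le)
    with that show False by simp
  qed
  define z where "z = u b"
  have zb: "a < b" "b \<le> n" "x \<le> z" "z < y" using bB by (auto simp: B_def z_def)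
  have invz: "inv u z = b" and invy: "inv u y = a" using pu by (simp_all add: z_def y_def)
  have z1: "1 \<le> z" using x1 zb by simp
  have inv: "(z, y) \<in> inv_set n u"
    using z1 zb y1 invz invy by (auto simp: inv_set_iff)
  have jk: "1 \<le> z" "z < y" "y \<le> n" "inv u y < inv u z" using z1 zb y1 invz invy by auto
  note key = bc_swap[OF u jk]
  have u'S: "stu z y u \<in> Sn n" using stu_Sn[OF u] z1 zb y1 by auto
  have "bcount v i m \<le> bcount (stu z y u) i m" if i1: "i \<in> {1..n}" and m1: "m \<in> {1..n}" for i m
  proof (cases "a \<le> i \<and> i < b \<and> z < m \<and> m \<le> y")
    case False
    then show ?thesis using key[of i m] lecount[OF i1 m1] invz invy by (auto split: if_splits)
  next
    case True
    then have ai: "a \<le> i" "i < b" and xm: "x < m" "m \<le> y" using zb by auto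
    define Au where "Au = {p \<in> {a..i}. m \<le> u p}"
    define Aux where "Aux = {p \<in> {a..i}. x \<le> u p}"
    define Av where "Av = {p \<in> {a..i}. m \<le> v p}"
    define Avx where "Avx = {p \<in> {a..i}. x \<le> v p}"
    have "Au = Aux"
    proof (intro set_eqI iffI)
      fix p assume "p \<in> Au"
      then show "p \<in> Aux" using xm by (auto simp: Au_def Aux_def)
    next
      fix p assume p: "p \<in> Aux"
      show "p \<in> Au"
      proof (cases "p = a")
        case True then show ?thesis using p xm by (auto simp: Au_def Aux_def y_def)
      next
        case False
        then have "a < p" "p < b" using p ai by (auto simp: Aux_def)
        then have "\<not> (x \<le> u p \<and> u p < y)" by (rule gap)
        then show ?thesis using p xm by (auto simp: Au_def Aux_def)
      qed
    qed
    have "Av \<subset> Avx"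
    proof
      show "Av \<subseteq> Avx" using xm by (auto simp: Av_def Avx_def)
      have "a \<in> Avx" "a \<notin> Av" using ai xm by (auto simp: Av_def Avx_def x_def)
      then show "Av \<noteq> Avx" by blast
    qed
    then have c1: "card Av < card Avx" by (rule psubset_card_mono[rotated]) (simp add: Avx_def)
    have a1': "1 \<le> a" "a \<le> Suc i" using a1 ai by auto
    have e1: "bcount v i m = bcount v (a - 1) m + card Av" using bcount_split[OF a1'] by (simp add: Av_def)
    have e2: "bcount v i x = bcount v (a - 1) x + card Avx" using bcount_split[OF a1'] by (simp add: Avx_def)
    have e3: "bcount u i m = bcount u (a - 1) m + card Au" using bcount_split[OF a1'] by (simp add: Au_def)
    have e4: "bcount u i x = bcount u (a - 1) x + card Aux" using bcount_split[OF a1'] by (simp add: Aux_def)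
    have "bcount v i x \<le> bcount u i x" using lecount i1 x1 by blast
    moreover have "card Au = card Aux" using \<open>Au = Aux\<close> by simp
    ultimately have "bcount v i m < bcount u i m"
      using e1 e2 e3 e4 pre[of m] pre[of x] c1 by linarith
    then show ?thesis using key[of i m] invz invy True by simp
  qed
  then have "bruhat_le n v (stu z y u)" using v u'S by (auto simp: bruhat_le_def)
  with inv show ?thesis by blast
qed

lemma path:
  assumes "bruhat_le n u w" "bruhat_le n v u" "v \<noteq> u"
  shows "(mg_edge n w)\<^sup>+\<^sup>+ u v"
  using assms
proof (induction "len n u" arbitrary: u rule: less_induct)
  case less
  have u: "u \<in> Sn n" and v: "v \<in> Sn n" using less.prems by (auto simp: bruhat_le_def)
  obtain j k where jk: "(j, k) \<in> inv_set n u" and vle: "bruhat_le n v (stu j k u)"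
    using chain[OF u v less.prems(2,3)] by blast
  have lt: "bruhat_lt n (stu j k u) u" by (rule C1a[OF u jk])
  have lew: "bruhat_le n (stu j k u) w" using lt less.prems(1) bruhat_trans by (auto simp: bruhat_lt_def)
  have edge: "mg_edge n w u (stu j k u)"
    using less.prems(1) lew lt jk by (auto simp: mg_edge_def inv_set_iff)
  show ?case
  proof (cases "stu j k u = v")
    case True
    then show ?thesis using edge by auto
  next
    case False
    have "len n (stu j k u) < len n u" by (rule C2[OF u jk])
    then have "(mg_edge n w)\<^sup>+\<^sup>+ (stu j k u) v" using less.hyps lew vle False by metis
    then show ?thesis using edge by (meson tranclp_into_tranclp2)
  qed
qed



lemma finite_inv_set: "finite (inv_set n u)"
  by (rule finite_subset[of _ "{1..n} \<times> {1..n}"]) (auto simp: inv_set_def)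

theorem mainTheorem5:
  fixes n :: nat and v w :: "nat \<Rightarrow> nat" and p :: "(nat \<Rightarrow> nat) \<Rightarrow> mpoly"
  assumes "w \<in> Sn n" and "v \<in> Sn n" and "bruhat_le n v w"
    and "schubert_class n v p"
  shows "KT_class n w v (iota n w p) \<and>
         (\<forall>q. KT_class n w v q \<longrightarrow> (\<forall>u. bruhat_le n u w \<longrightarrow> q u = iota n w p u))"
proof -
  have vw: "bruhat_le n v w" by fact
  have HTp: "HT_flag n p"
    and supp: "\<And>u. u \<in> Sn n \<Longrightarrow> \<not> bruhat_le n v u \<Longrightarrow> p u = 0"
    and hom: "\<And>u. u \<in> Sn n \<Longrightarrow> p u \<noteq> 0 \<Longrightarrow> homogeneous (len n v) (p u)"
    and pv: "p v = inv_prod n v"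
    using assms(4) by (auto simp: schubert_class_def)
  define P where "P = iota n w p"
  have Pu: "P u = p u" if "bruhat_le n u w" for u using that by (simp add: P_def iota_def)
  have oe: "out_edges n w v = inv_set n v" by (rule out_edges_eq[OF vw])
  have ip0: "inv_prod n v \<noteq> 0"
    unfolding inv_prod_def
    by (subst prod_zero_iff[OF finite_inv_set]) (auto simp: inv_set_iff lbl_nonzero)
  have Pv: "P v = (\<Prod>(j,k)\<in>out_edges n w v. lbl j k)"
    using Pu[OF vw] pv oe by (simp add: inv_prod_def)
  have degv: "poly_deg (P v) = len n v"
    using Pu[OF vw] pv ip0 hom[OF assms(2)] homogeneous_poly_deg by auto
  have KT1: "KT_class n w v P"
    unfolding KT_class_def
  proof (intro conjI allI impI)
    show "HT_X n w P"
      unfolding HT_X_def gkm_def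
    proof (intro allI impI)
      fix u j k assume h: "u \<in> {u. bruhat_le n u w} \<and> 1 \<le> j \<and> j < k \<and> k \<le> n \<and> stu j k u \<in> {u. bruhat_le n u w}"
      then have "u \<in> Sn n" "stu j k u \<in> Sn n" by (auto simp: bruhat_le_def)
      then have "lbl j k dvd (p u - p (stu j k u))" using HTp h by (auto simp: HT_flag_def gkm_def)
      then show "lbl j k dvd (P u - P (stu j k u))" using h Pu by auto
    qed
    show "P v = (\<Prod>(j,k)\<in>out_edges n w v. lbl j k)" by (rule Pv)
  next
    fix u assume h: "bruhat_le n u w \<and> P u \<noteq> 0"
    then have "u \<in> Sn n" "p u \<noteq> 0" using Pu by (auto simp: bruhat_le_def)
    then show "homogeneous (poly_deg (P v)) (P u)" using hom h Pu degv by auto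
  next
    fix u assume h: "bruhat_le n u w \<and> u \<noteq> v \<and> \<not> (mg_edge n w)\<^sup>+\<^sup>+ u v"
    show "P u = 0"
    proof (rule ccontr)
      assume "P u \<noteq> 0"
      then have "u \<in> Sn n" "p u \<noteq> 0" using Pu h by (auto simp: bruhat_le_def)
      then have "bruhat_le n v u" using supp by blast
      then have "(mg_edge n w)\<^sup>+\<^sup>+ u v" using path h by blast
      with h show False by simp
    qed
  qed
  have uniq: "\<forall>u. bruhat_le n u w \<longrightarrow> q u = P u" if KTq: "KT_class n w v q" for q
  proof -
    have gq: "HT_X n w q" and qv: "q v = (\<Prod>(j,k)\<in>out_edges n w v. lbl j k)"
      and qh: "\<And>u. bruhat_le n u w \<Longrightarrow> q u \<noteq> 0 \<Longrightarrow> homogeneous (poly_deg (q v)) (q u)"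
      and qs: "\<And>u. bruhat_le n u w \<Longrightarrow> u \<noteq> v \<Longrightarrow> \<not> (mg_edge n w)\<^sup>+\<^sup>+ u v \<Longrightarrow> q u = 0"
      using KTq by (auto simp: KT_class_def)
    have gP: "HT_X n w P"
      and Ph: "\<And>u. bruhat_le n u w \<Longrightarrow> P u \<noteq> 0 \<Longrightarrow> homogeneous (poly_deg (P v)) (P u)"
      and Ps: "\<And>u. bruhat_le n u w \<Longrightarrow> u \<noteq> v \<Longrightarrow> \<not> (mg_edge n w)\<^sup>+\<^sup>+ u v \<Longrightarrow> P u = 0"
      using KT1 by (auto simp: KT_class_def)
    define d where "d u = q u - P u" for u
    have qvP: "q v = P v" using qv Pv by simp
    have dv: "d v = 0" using qvP by (simp add: d_def)
    have dh: "homogeneous (len n v) (d u)" if "bruhat_le n u w" for u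
    proof -
      have "homogeneous (len n v) (q u)"
        using qh[OF that] qvP degv by (cases "q u = 0") auto
      moreover have "homogeneous (len n v) (P u)"
        using Ph[OF that] degv by (cases "P u = 0") auto
      ultimately show ?thesis unfolding d_def by (rule homogeneous_diff)
    qed
    have dlen: "len n v < len n u" if "bruhat_le n u w" "d u \<noteq> 0" for u
    proof -
      have "u \<noteq> v" using that dv by auto
      moreover have "q u \<noteq> 0 \<or> P u \<noteq> 0" using that by (auto simp: d_def)
      ultimately have "(mg_edge n w)\<^sup>+\<^sup>+ u v" using qs[OF that(1)] Ps[OF that(1)] by blast
      then show ?thesis by (rule path_len)
    qed
    have dgkm: "lbl j k dvd d u"
      if uw: "bruhat_le n u w" and jk: "(j, k) \<in> inv_set n u" and z: "d (stu j k u) = 0" for u j k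
    proof -
      have u: "u \<in> Sn n" using uw by (simp add: bruhat_le_def)
      have "bruhat_le n (stu j k u) w" using C1a[OF u jk] uw bruhat_trans by (auto simp: bruhat_lt_def)
      moreover have "1 \<le> j" "j < k" "k \<le> n" using jk by (auto simp: inv_set_iff)
      ultimately have "lbl j k dvd (q u - q (stu j k u))" "lbl j k dvd (P u - P (stu j k u))"
        using gq gP uw unfolding HT_X_def gkm_def by blast+
      then have "lbl j k dvd ((q u - q (stu j k u)) - (P u - P (stu j k u)))" by (rule dvd_diff)
      also have "(q u - q (stu j k u)) - (P u - P (stu j k u)) = d u - d (stu j k u)"
        by (simp add: d_def algebra_simps)
      finally show ?thesis using z by simp
    qed
    have main: "d u = 0" if "bruhat_le n u w" for u
      using that
    proof (induction "len n u" arbitrary: u rule: less_induct)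
      case less
      show ?case
      proof (rule ccontr)
        assume ne: "d u \<noteq> 0"
        have u: "u \<in> Sn n" using less.prems by (simp add: bruhat_le_def)
        have "\<forall>(j, k)\<in>inv_set n u. lbl j k dvd d u"
        proof (clarify)
          fix j k assume jk: "(j, k) \<in> inv_set n u"
          have "bruhat_le n (stu j k u) w" using C1a[OF u jk] less.prems bruhat_trans by (auto simp: bruhat_lt_def)
          moreover have "len n (stu j k u) < len n u" by (rule C2[OF u jk])
          ultimately have "d (stu j k u) = 0" using less.hyps by blast
          then show "lbl j k dvd d u" by (rule dgkm[OF less.prems jk])
        qed
        moreover have "\<forall>(j, k)\<in>inv_set n u. j < k" by (auto simp: inv_set_iff)
        moreover have "len n v < card (inv_set n u)" using dlen[OF less.prems ne] by (simp add: len_def)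
        ultimately have "d u = 0" using alg_main[OF finite_inv_set _ _ dh[OF less.prems]] by blast
        with ne show False by simp
      qed
    qed
    show ?thesis using main by (simp add: d_def)
  qed
  show ?thesis using KT1 uniq by (simp add: P_def)
qed

end
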